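(* Let $\kappa$ be a cardinal, $\mathbb{F}$ a field, and $V$ the vector space over $\mathbb{F}$ presented by generators $x_\alpha,y_\alpha,z_\alpha$ ($\alpha\in\kappa$) and relations $x_\alpha+y_\alpha+z_\alpha=0$. Let $F\colon\mathcal{P}(\kappa)^3\to\mathrm{Sub}(V)$, $F(A,B,C)=\mathrm{Span}\{x_\alpha:\alpha\in A\}+\mathrm{Span}\{y_\beta:\beta\in B\}+\mathrm{Span}\{z_\gamma:\gamma\in C\}$, and $G\colon\mathrm{Sub}(V)\to\mathcal{P}(\kappa)^3$, $G(W)=(\{\alpha:x_\alpha\in W\},\{\beta:y_\beta\in W\},\{\gamma:z_\gamma\in W\})$. Then for all $(A,B,C)\in\mathcal{P}(\kappa)^3$, $G(F(A,B,C))=(A\cup(B\cap C),\ B\cup(A\cap C),\ C\cup(A\cap B))$.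
   Context: $\mathcal{P}(\kappa)$ is the power set of $\kappa$; $\mathrm{Sub}(V)$ is the lattice of subspaces of $V$. *)

theory Defs
  imports Main HOL.Modules "HOL-Library.Function_Algebras"
begin

(* Free vector space over a field 'a on generators x_alpha, y_alpha, z_alpha,
   alpha ranging over the index type 'i (playing the role of the cardinal kappa). *)

datatype gen = GX | GY | GZ

definition fscale :: "'a::field \<Rightarrow> ('b \<Rightarrow> 'a) \<Rightarrow> ('b \<Rightarrow> 'a)" where
  "fscale c f = (\<lambda>p. c * f p)"

definition egen :: "'i \<Rightarrow> gen \<Rightarrow> ('i \<times> gen \<Rightarrow> 'a::field)" where
  "egen \<alpha> g = (\<lambda>p. if p = (\<alpha>, g) then 1 else 0)"

abbreviation fspan :: "('b \<Rightarrow> 'a::field) set \<Rightarrow> ('b \<Rightarrow> 'a) set" where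
  "fspan S \<equiv> module.span fscale S"

definition rels :: "('i \<times> gen \<Rightarrow> 'a::field) set" where
  "rels = range (\<lambda>\<alpha>. egen \<alpha> GX + egen \<alpha> GY + egen \<alpha> GZ)"

(* V = Free / span(rels).  Subspaces of V correspond (via the quotient map q)
   to subspaces of Free containing span(rels); we represent a subspace W of V
   by its preimage q^{-1}(W).  Then:
   - the preimage of F(A,B,C) = Span{x_a : a in A} + Span{y_b} + Span{z_c}
     is the span of those generators together with the relations;
   - x_alpha \<in> W  iff  egen alpha GX \<in> q^{-1}(W). *)
definition Fmap :: "'i set \<Rightarrow> 'i set \<Rightarrow> 'i set \<Rightarrow> ('i \<times> gen \<Rightarrow> 'a::field) set" where
  "Fmap A B C = fspan ((\<lambda>\<alpha>. egen \<alpha> GX) ` A \<union> (\<lambda>\<beta>. egen \<beta> GY) ` B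
                      \<union> (\<lambda>\<gamma>. egen \<gamma> GZ) ` C \<union> rels)"

definition Gmap :: "('i \<times> gen \<Rightarrow> 'a::field) set \<Rightarrow> 'i set \<times> 'i set \<times> 'i set" where
  "Gmap W = ({\<alpha>. egen \<alpha> GX \<in> W}, {\<beta>. egen \<beta> GY \<in> W}, {\<gamma>. egen \<gamma> GZ \<in> W})"

end

theory Submission
  imports Defs
begin

lemma mod_fscale: "module (fscale :: 'a::field \<Rightarrow> ('b \<Rightarrow> 'a) \<Rightarrow> _)"
  by unfold_locales (auto simp: fscale_def fun_eq_iff algebra_simps)

lemma span_eqsub:
  assumes "S \<subseteq> {f. f (a, g1) = f (a, g2)}"
  shows "fspan (S :: ('i \<times> gen \<Rightarrow> 'a::field) set) \<subseteq> {f. f (a, g1) = f (a, g2)}"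
proof -
  interpret m: module "fscale :: 'a \<Rightarrow> ('i \<times> gen \<Rightarrow> 'a) \<Rightarrow> _" by (rule mod_fscale)
  have "m.subspace {f :: 'i \<times> gen \<Rightarrow> 'a. f (a, g1) = f (a, g2)}"
    unfolding m.subspace_def by (auto simp: fscale_def)
  thus ?thesis using assms m.span_minimal by blast
qed

lemma rels_sub: "rels \<subseteq> {f. f (a, g1) = f (a, g2)}"
  unfolding rels_def egen_def by (cases g1; cases g2) auto

theorem lemma6p2:
  fixes A B C :: "'i set"
  shows "Gmap (Fmap A B C :: ('i \<times> gen \<Rightarrow> 'a::field) set)
           = (A \<union> (B \<inter> C), B \<union> (A \<inter> C), C \<union> (A \<inter> B))"
proof -
  interpret m: module "fscale :: 'a \<Rightarrow> ('i \<times> gen \<Rightarrow> 'a) \<Rightarrow> _" by (rule mod_fscale)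
  let ?S = "(\<lambda>\<alpha>. egen \<alpha> GX) ` A \<union> (\<lambda>\<beta>. egen \<beta> GY) ` B
                      \<union> (\<lambda>\<gamma>. egen \<gamma> GZ) ` C \<union> (rels :: ('i \<times> gen \<Rightarrow> 'a) set)"
  have F: "Fmap A B C = fspan ?S" by (simp add: Fmap_def)
  have r: "\<And>a. egen a GX + egen a GY + egen a GZ \<in> fspan ?S"
    by (rule m.span_base) (auto simp: rels_def)
  have inA: "a \<in> A \<Longrightarrow> egen a GX \<in> fspan ?S" for a by (rule m.span_base) auto
  have inB: "a \<in> B \<Longrightarrow> egen a GY \<in> fspan ?S" for a by (rule m.span_base) auto
  have inC: "a \<in> C \<Longrightarrow> egen a GZ \<in> fspan ?S" for a by (rule m.span_base) auto
  have e1: "egen a GX = (egen a GX + egen a GY + egen a GZ) - egen a GY - egen a GZ" for a :: 'i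
    by simp
  have e2: "egen a GY = (egen a GX + egen a GY + egen a GZ) - egen a GX - egen a GZ" for a :: 'i
    by simp
  have e3: "egen a GZ = (egen a GX + egen a GY + egen a GZ) - egen a GX - egen a GY" for a :: 'i
    by simp
  have cx: "egen a GX \<in> fspan ?S \<longleftrightarrow> a \<in> A \<union> (B \<inter> C)" for a
  proof
    assume h: "egen a GX \<in> fspan ?S"
    show "a \<in> A \<union> (B \<inter> C)"
    proof (rule ccontr)
      assume n: "a \<notin> A \<union> (B \<inter> C)"
      show False
      proof (cases "a \<in> B")
        case True
        hence "a \<notin> C" using n by auto
        have "?S \<subseteq> {f. f (a, GX) = f (a, GZ)}" using n \<open>a \<notin> C\<close>
           using rels_sub[of a GX GZ] by (auto simp: egen_def)
        from span_eqsub[OF this] h show False by (auto simp: egen_def)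
      next
        case False
        have "?S \<subseteq> {f. f (a, GX) = f (a, GY)}" using n False
           using rels_sub[of a GX GY] by (auto simp: egen_def)
        from span_eqsub[OF this] h show False by (auto simp: egen_def)
      qed
    qed
  next
    assume "a \<in> A \<union> (B \<inter> C)"
    then show "egen a GX \<in> fspan ?S"
      by (metis IntE Un_iff e1 inA inB inC m.span_diff r)
  qed
  have cy: "egen a GY \<in> fspan ?S \<longleftrightarrow> a \<in> B \<union> (A \<inter> C)" for a
  proof
    assume h: "egen a GY \<in> fspan ?S"
    show "a \<in> B \<union> (A \<inter> C)"
    proof (rule ccontr)
      assume n: "a \<notin> B \<union> (A \<inter> C)"
      show False
      proof (cases "a \<in> A")
        case True
        hence "a \<notin> C" using n by auto
        have "?S \<subseteq> {f. f (a, GY) = f (a, GZ)}" using n \<open>a \<notin> C\<close>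
           using rels_sub[of a GY GZ] by (auto simp: egen_def)
        from span_eqsub[OF this] h show False by (auto simp: egen_def)
      next
        case False
        have "?S \<subseteq> {f. f (a, GY) = f (a, GX)}" using n False
           using rels_sub[of a GY GX] by (auto simp: egen_def)
        from span_eqsub[OF this] h show False by (auto simp: egen_def)
      qed
    qed
  next
    assume "a \<in> B \<union> (A \<inter> C)"
    then show "egen a GY \<in> fspan ?S"
      by (metis IntE Un_iff e2 inA inB inC m.span_diff r)
  qed
  have cz: "egen a GZ \<in> fspan ?S \<longleftrightarrow> a \<in> C \<union> (A \<inter> B)" for a
  proof
    assume h: "egen a GZ \<in> fspan ?S"
    show "a \<in> C \<union> (A \<inter> B)"
    proof (rule ccontr)
      assume n: "a \<notin> C \<union> (A \<inter> B)"
      show False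
      proof (cases "a \<in> A")
        case True
        hence "a \<notin> B" using n by auto
        have "?S \<subseteq> {f. f (a, GZ) = f (a, GY)}" using n \<open>a \<notin> B\<close>
           using rels_sub[of a GZ GY] by (auto simp: egen_def)
        from span_eqsub[OF this] h show False by (auto simp: egen_def)
      next
        case False
        have "?S \<subseteq> {f. f (a, GZ) = f (a, GX)}" using n False
           using rels_sub[of a GZ GX] by (auto simp: egen_def)
        from span_eqsub[OF this] h show False by (auto simp: egen_def)
      qed
    qed
  next
    assume "a \<in> C \<union> (A \<inter> B)"
    then show "egen a GZ \<in> fspan ?S"
      by (metis IntE Un_iff e3 inA inB inC m.span_diff r)
  qed
  show ?thesis unfolding Gmap_def F using cx cy cz by blast
qed

end
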